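(* Let $\mu,\beta,\gamma$ be positive reals with $\gamma+\beta+\sqrt{\mu}<\frac{1}{2000}$. Let $G$ be a bipartite graph with bipartition $A\cup B$, $|A|=|B|=m$, minimum degree at least $\frac{m}{10}$ and at least $(1-\beta)m^2$ edges; let $\mathcal{F}$ be a $\mu m$-bounded incompatibility system over $G$; and let $e_i=\{a_i,b_i\}$ ($i=1,\dots,m$, $a_i\in A$, $b_i\in B$) be a perfect matching of $G$, with $f$ the bijection $f(a_i)=b_i$, $f(b_i)=a_i$. Suppose $P=(v_0,v_1,\dots,v_\ell)$ is a proper smooth path in $G$ such that there is no vertex $x\notin V(P)$ for which $(f(x),x,v_0,\dots,v_\ell)$ is a proper smooth path. Then there exists a set $Z\subseteq N(v_0)\cap V(P)$ with $|Z|\ge d(v_0)-(25\sqrt{\mu}+2\gamma)m$ such that for every $v_i\in Z$ the path $(v_{i-1},\dots,v_1,v_0,v_i,v_{i+1},\dots,v_\ell)$ is a proper smooth path.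
   Context: All graphs are finite and simple; $N(v)$, $d(v)$ are neighborhood and degree; $|P|$ is the number of vertices of $P$; $\gamma m$ is treated as an integer. An incompatibility system $\mathcal{F}$ over $G=(V,E)$ is a family $\{F_v\}_{v\in V}$ where each $F_v$ is a set of unordered pairs $\{e,e'\}$ of distinct edges with $e\cap e'=\{v\}$; edges are incompatible if the pair lies in some $F_v$, compatible otherwise. A path or cycle is compatible with $\mathcal{F}$ if every pair of its edges is compatible. $\mathcal{F}$ is $\Delta$-bounded if for every vertex $v$ and edge $e\ni v$, at most $\Delta$ other edges $e'\ni v$ satisfy $\{e,e'\}\in F_v$. For a path $P=(v_0,\dots,v_\ell)$ and a vertex $w$, a vertex $v_i\in V(P)$ adjacent to $w$ is a bad neighbor of $w$ in $P$ if $\{w,v_i\}$ is incompatible with $\{v_i,v_{i-1}\}$ or with $\{v_i,v_{i+1}\}$ (for those of these that are edges of $P$); $w$ is $\delta$-good for $P$ if it has fewer than $\delta|P|$ bad neighbors in $P$. A path or cycle $H$ of $G$ is proper if it contains all edges $e_1,\dots,e_{\gamma m}$ and $f(V(H)\cap A)=V(H)\cap B$. Let $X_A$ be the set of $x\in A$ for which there are at least $\sqrt{\mu}m$ indices $i$ such that $\{a_i,b_i\}$ and $\{x,b_i\}$ are incompatible edges, and $X_B$ the set of $y\in B$ for which there are at least $\sqrt{\mu}m$ indices $i$ such that $\{a_i,b_i\}$ and $\{a_i,y\}$ are incompatible edges. A proper path $P=(v_0,\dots,v_\ell)$ with $v_0\in A$, $v_\ell\in B$ is smooth if (i) $P$ is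 compatible with $\mathcal{F}$, (ii) $v_0$ and $v_\ell$ are $8\sqrt{\mu}$-good for $P$, and (iii) $v_0\notin X_A$ and $v_\ell\notin X_B$. (A "proper smooth path" is in particular required to have its first vertex in $A$ and last vertex in $B$.) *)

theory Defs
  imports Complex_Main
begin

definition nbhd :: "'a set set \<Rightarrow> 'a \<Rightarrow> 'a set" where
  "nbhd E v = {u. {v, u} \<in> E}"

definition deg :: "'a set set \<Rightarrow> 'a \<Rightarrow> nat" where
  "deg E v = card (nbhd E v)"

definition bipartite_graph :: "'a set set \<Rightarrow> 'a set \<Rightarrow> 'a set \<Rightarrow> bool" where
  "bipartite_graph E A B \<longleftrightarrow> finite A \<and> finite B \<and> A \<inter> B = {} \<and>
     (\<forall>e\<in>E. \<exists>x\<in>A. \<exists>y\<in>B. e = {x, y})"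

definition is_path :: "'a set set \<Rightarrow> 'a list \<Rightarrow> bool" where
  "is_path E P \<longleftrightarrow> P \<noteq> [] \<and> distinct P \<and> (\<forall>i. Suc i < length P \<longrightarrow> {P!i, P!Suc i} \<in> E)"

definition path_edges :: "'a list \<Rightarrow> 'a set set" where
  "path_edges P = {{P!i, P!Suc i} | i. Suc i < length P}"

definition incompatibility_system :: "'a set set \<Rightarrow> ('a \<Rightarrow> 'a set set set) \<Rightarrow> bool" where
  "incompatibility_system E F \<longleftrightarrow>
     (\<forall>v. \<forall>p\<in>F v. \<exists>e e'. p = {e, e'} \<and> e \<noteq> e' \<and> e \<in> E \<and> e' \<in> E \<and> e \<inter> e' = {v})"

definition incompatible :: "('a \<Rightarrow> 'a set set set) \<Rightarrow> 'a set \<Rightarrow> 'a set \<Rightarrow> bool" where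
  "incompatible F e e' \<longleftrightarrow> (\<exists>v. {e, e'} \<in> F v)"

definition bounded_sys :: "'a set set \<Rightarrow> ('a \<Rightarrow> 'a set set set) \<Rightarrow> real \<Rightarrow> bool" where
  "bounded_sys E F \<Delta> \<longleftrightarrow>
     (\<forall>v e. e \<in> E \<and> v \<in> e \<longrightarrow>
        real (card {e'\<in>E. v \<in> e' \<and> e' \<noteq> e \<and> {e, e'} \<in> F v}) \<le> \<Delta>)"

definition compatible_path :: "('a \<Rightarrow> 'a set set set) \<Rightarrow> 'a list \<Rightarrow> bool" where
  "compatible_path F P \<longleftrightarrow> (\<forall>e\<in>path_edges P. \<forall>e'\<in>path_edges P. \<not> incompatible F e e')"

definition bad_nbrs :: "'a set set \<Rightarrow> ('a \<Rightarrow> 'a set set set) \<Rightarrow> 'a list \<Rightarrow> 'a \<Rightarrow> 'a set" where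
  "bad_nbrs E F P w = {P!i | i. i < length P \<and> {w, P!i} \<in> E \<and>
      ((0 < i \<and> incompatible F {w, P!i} {P!i, P!(i - 1)}) \<or>
       (Suc i < length P \<and> incompatible F {w, P!i} {P!i, P!Suc i}))}"

definition good :: "'a set set \<Rightarrow> ('a \<Rightarrow> 'a set set set) \<Rightarrow> real \<Rightarrow> 'a list \<Rightarrow> 'a \<Rightarrow> bool" where
  "good E F \<delta> P w \<longleftrightarrow> real (card (bad_nbrs E F P w)) < \<delta> * real (length P)"

definition proper :: "'a set \<Rightarrow> 'a set \<Rightarrow> (nat \<Rightarrow> 'a) \<Rightarrow> (nat \<Rightarrow> 'a) \<Rightarrow> ('a \<Rightarrow> 'a) \<Rightarrow> nat \<Rightarrow> 'a list \<Rightarrow> bool" where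
  "proper A B a b f k H \<longleftrightarrow>
     (\<forall>i\<in>{1..k}. {a i, b i} \<in> path_edges H) \<and> f ` (set H \<inter> A) = set H \<inter> B"

definition X_A :: "('a \<Rightarrow> 'a set set set) \<Rightarrow> 'a set \<Rightarrow> (nat \<Rightarrow> 'a) \<Rightarrow> (nat \<Rightarrow> 'a) \<Rightarrow> nat \<Rightarrow> real \<Rightarrow> 'a set" where
  "X_A F A a b m \<mu> = {x\<in>A. real (card {i\<in>{1..m}. incompatible F {a i, b i} {x, b i}}) \<ge> sqrt \<mu> * real m}"

definition X_B :: "('a \<Rightarrow> 'a set set set) \<Rightarrow> 'a set \<Rightarrow> (nat \<Rightarrow> 'a) \<Rightarrow> (nat \<Rightarrow> 'a) \<Rightarrow> nat \<Rightarrow> real \<Rightarrow> 'a set" where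
  "X_B F B a b m \<mu> = {y\<in>B. real (card {i\<in>{1..m}. incompatible F {a i, b i} {a i, y}}) \<ge> sqrt \<mu> * real m}"

definition proper_smooth ::
  "'a set set \<Rightarrow> ('a \<Rightarrow> 'a set set set) \<Rightarrow> 'a set \<Rightarrow> 'a set \<Rightarrow> (nat \<Rightarrow> 'a) \<Rightarrow> (nat \<Rightarrow> 'a) \<Rightarrow>
   ('a \<Rightarrow> 'a) \<Rightarrow> nat \<Rightarrow> real \<Rightarrow> nat \<Rightarrow> 'a list \<Rightarrow> bool" where
  "proper_smooth E F A B a b f m \<mu> k H \<longleftrightarrow>
     is_path E H \<and> proper A B a b f k H \<and> hd H \<in> A \<and> last H \<in> B \<and>
     compatible_path F H \<and>
     good E F (8 * sqrt \<mu>) H (hd H) \<and> good E F (8 * sqrt \<mu>) H (last H) \<and>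
     hd H \<notin> X_A F A a b m \<mu> \<and> last H \<notin> X_B F B a b m \<mu>"

end

theory Submission
  imports Defs
begin



lemma pe_Nil[simp]: "path_edges [] = {}" by (simp add: path_edges_def)
lemma pe_single[simp]: "path_edges [x] = {}" by (simp add: path_edges_def)
lemma pe_Cons2: "path_edges (x # y # xs) = insert {x, y} (path_edges (y # xs))"
proof -
  have "path_edges (x # y # xs) = {{(x#y#xs)!i, (x#y#xs)!Suc i} | i. Suc i < length (x#y#xs)}"
    by (simp add: path_edges_def)
  also have "\<dots> = insert {x,y} {{(y#xs)!i, (y#xs)!Suc i} | i. Suc i < length (y#xs)}"
    apply (rule set_eqI) apply (rule iffI)
     apply (clarsimp) subgoal for i by (cases i) auto
    apply clarsimp
    apply (erule disjE)
     apply (rule exI[of _ 0]) apply simp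
    apply clarsimp subgoal for i by (rule exI[of _ "Suc i"]) simp
    done
  finally show ?thesis by (simp add: path_edges_def)
qed

lemma pe_append: "xs \<noteq> [] \<Longrightarrow> ys \<noteq> [] \<Longrightarrow>
   path_edges (xs @ ys) = path_edges xs \<union> insert {last xs, hd ys} (path_edges ys)"
proof (induction xs)
  case Nil then show ?case by simp
next
  case (Cons x xs)
  show ?case
  proof (cases xs)
    case Nil
    then show ?thesis using Cons.prems by (cases ys) (auto simp: pe_Cons2)
  next
    case (Cons z zs)
    then show ?thesis using Cons.IH Cons.prems by (auto simp: pe_Cons2)
  qed
qed

lemma pe_rev: "path_edges (rev xs) = path_edges xs"
proof (induction xs)
  case Nil then show ?case by simp
next
  case (Cons x xs)
  show ?case
  proof (cases xs)
    case Nil then show ?thesis by simp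
  next
    case (Cons z zs)
    have "path_edges (rev (x # xs)) = path_edges (rev xs @ [x])" by simp
    also have "\<dots> = path_edges (rev xs) \<union> insert {last (rev xs), x} {}"
      using pe_append[of "rev xs" "[x]"] Cons by simp
    also have "\<dots> = path_edges (x # xs)" using Cons.IH Cons by (auto simp: pe_Cons2)
    finally show ?thesis .
  qed
qed

lemma pe_mem: "e \<in> path_edges P \<Longrightarrow> u \<in> e \<Longrightarrow> u \<in> set P"
  by (auto simp: path_edges_def)

lemma pe_hd: "distinct P \<Longrightarrow> e \<in> path_edges P \<Longrightarrow> P!0 \<in> e \<Longrightarrow> e = {P!0, P!1}"
proof -
  assume d: "distinct P" and e: "e \<in> path_edges P" and h: "P!0 \<in> e"
  then obtain i where i: "e = {P!i, P!Suc i}" "Suc i < length P" by (auto simp: path_edges_def)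
  have "P!0 = P!i \<or> P!0 = P!Suc i" using h i by auto
  moreover have "P!0 \<noteq> P!Suc i" using nth_eq_iff_index_eq[OF d, of 0 "Suc i"] i by force
  ultimately have "P!0 = P!i" by blast
  then have "i = 0" using nth_eq_iff_index_eq[OF d, of 0 i] i by force
  then show ?thesis using i by simp
qed

lemma is_path_char: "is_path E Q \<longleftrightarrow> Q \<noteq> [] \<and> distinct Q \<and> path_edges Q \<subseteq> E"
  by (auto simp: is_path_def path_edges_def)

lemma bad_char: "distinct Q \<Longrightarrow> bad_nbrs E F Q w =
  {u\<in>set Q. {w,u} \<in> E \<and> (\<exists>e\<in>path_edges Q. u \<in> e \<and> incompatible F {w,u} e)}"
proof (rule set_eqI, rule iffI)
  fix u assume d: "distinct Q" and "u \<in> bad_nbrs E F Q w"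
  then obtain i where i: "u = Q!i" "i < length Q" "{w, Q!i} \<in> E"
    "(0 < i \<and> incompatible F {w, Q!i} {Q!i, Q!(i - 1)}) \<or>
       (Suc i < length Q \<and> incompatible F {w, Q!i} {Q!i, Q!Suc i})"
    by (auto simp: bad_nbrs_def)
  from i(4) show "u \<in> {u\<in>set Q. {w,u} \<in> E \<and> (\<exists>e\<in>path_edges Q. u \<in> e \<and> incompatible F {w,u} e)}"
  proof
    assume h: "0 < i \<and> incompatible F {w, Q!i} {Q!i, Q!(i - 1)}"
    have "{Q!i, Q!(i - 1)} \<in> path_edges Q"
      unfolding path_edges_def using h i(2)
      by (auto intro!: exI[of _ "i - 1"])
    then show ?thesis using i h by auto
  next
    assume h: "Suc i < length Q \<and> incompatible F {w, Q!i} {Q!i, Q!Suc i}"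
    have "{Q!i, Q!Suc i} \<in> path_edges Q"
      unfolding path_edges_def using h by auto
    then show ?thesis using i h by auto
  qed
next
  fix u assume d: "distinct Q" and
    u: "u \<in> {u\<in>set Q. {w,u} \<in> E \<and> (\<exists>e\<in>path_edges Q. u \<in> e \<and> incompatible F {w,u} e)}"
  then obtain i e where i: "u = Q!i" "i < length Q" "{w,u}\<in>E" "e \<in> path_edges Q" "u \<in> e"
     "incompatible F {w,u} e"
    by (auto simp: in_set_conv_nth)
  then obtain j where j: "e = {Q!j, Q!Suc j}" "Suc j < length Q" by (auto simp: path_edges_def)
  have "u = Q!j \<or> u = Q!Suc j" using i j by auto
  then show "u \<in> bad_nbrs E F Q w"
  proof
    assume "u = Q!j"
    then have "j = i" using d i j by (simp add: nth_eq_iff_index_eq)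
    then have "i < length Q \<and> {w, Q!i} \<in> E \<and> (Suc i < length Q \<and> incompatible F {w, Q!i} {Q!i, Q!Suc i})"
      using i j by simp
    then show ?thesis unfolding bad_nbrs_def using i(1) by blast
  next
    assume "u = Q!Suc j"
    then have "Suc j = i" using d i j by (simp add: nth_eq_iff_index_eq)
    then have "e = {Q!i, Q!(i-1)}" using j by auto
    then have "i < length Q \<and> {w, Q!i} \<in> E \<and> (0 < i \<and> incompatible F {w, Q!i} {Q!i, Q!(i - 1)})"
      using i j \<open>Suc j = i\<close> by auto
    then show ?thesis unfolding bad_nbrs_def using i(1) by blast
  qed
qed




lemma inc_sym: "incompatible F e e' = incompatible F e' e"
  by (simp add: incompatible_def insert_commute)

lemma inc_sys: assumes "incompatibility_system E F" "incompatible F e e'"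
  shows "e \<in> E \<and> e' \<in> E \<and> e \<noteq> e' \<and> (\<exists>v. e \<inter> e' = {v} \<and> {e,e'} \<in> F v)"
proof -
  obtain v where v: "{e,e'} \<in> F v" using assms(2) by (auto simp: incompatible_def)
  have "\<forall>q\<in>F v. \<exists>p p'. q = {p, p'} \<and> p \<noteq> p' \<and> p \<in> E \<and> p' \<in> E \<and> p \<inter> p' = {v}"
    using assms(1) unfolding incompatibility_system_def by simp
  with v obtain p p' where p: "{e,e'} = {p,p'}" "p \<noteq> p'" "p \<in> E" "p' \<in> E" "p \<inter> p' = {v}"
    by meson
  from p(1) have "(e = p \<and> e' = p') \<or> (e = p' \<and> e' = p)" by (simp add: doubleton_eq_iff)
  then show ?thesis using p v by (auto simp: Int_commute)
qed

lemma inc_irrefl: "incompatibility_system E F \<Longrightarrow> \<not> incompatible F e e"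
  using inc_sys by blast

lemma bip_edge: "bipartite_graph E A B \<Longrightarrow> {x,y} \<in> E \<Longrightarrow> (x\<in>A \<and> y\<in>B) \<or> (x\<in>B \<and> y\<in>A)"
  unfolding bipartite_graph_def by (metis doubleton_eq_iff)

lemma bip_disj: "bipartite_graph E A B \<Longrightarrow> A \<inter> B = {}"
  unfolding bipartite_graph_def by blast

lemma bip_edgeA: "bipartite_graph E A B \<Longrightarrow> {x,y} \<in> E \<Longrightarrow> x \<in> A \<Longrightarrow> y \<in> B \<and> y \<notin> A"
  using bip_edge[of E A B x y] bip_disj[of E A B] by blast

lemma bip_edgeB: "bipartite_graph E A B \<Longrightarrow> {x,y} \<in> E \<Longrightarrow> x \<in> B \<Longrightarrow> y \<in> A \<and> y \<notin> B"
  using bip_edge[of E A B x y] bip_disj[of E A B] by blast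

lemma bip_noloop: "bipartite_graph E A B \<Longrightarrow> {x,x} \<notin> E"
  using bip_edge[of E A B x x] bip_disj[of E A B] by blast

lemma finite_E: assumes "bipartite_graph E A B" shows "finite E"
proof -
  have "E \<subseteq> (\<lambda>(x,y). {x,y}) ` (A \<times> B)"
    using assms unfolding bipartite_graph_def by fastforce
  moreover have "finite (A \<times> B)" using assms unfolding bipartite_graph_def by simp
  ultimately show ?thesis using finite_subset by blast
qed

definition Wset :: "'a set set \<Rightarrow> ('a \<Rightarrow> 'a set set set) \<Rightarrow> 'a \<Rightarrow> 'a set \<Rightarrow> 'a set" where
  "Wset E F v e = {w. {w,v} \<in> E \<and> incompatible F {w,v} e}"

lemma W_card:
  assumes sys: "incompatibility_system E F" and bnd: "bounded_sys E F D" and fE: "finite E"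
    and ve: "v \<in> e" and D: "D \<ge> 0"
  shows "finite (Wset E F v e) \<and> real (card (Wset E F v e)) \<le> D"
proof (cases "Wset E F v e = {}")
  case True then show ?thesis using D by simp
next
  case False
  then obtain w0 where "w0 \<in> Wset E F v e" by blast
  then have eE: "e \<in> E" using inc_sys[OF sys] by (auto simp: Wset_def)
  define S where "S = {e'\<in>E. v \<in> e' \<and> e' \<noteq> e \<and> {e, e'} \<in> F v}"
  have fS: "finite S" using fE by (simp add: S_def)
  have inj: "inj_on (\<lambda>w. {w,v}) (Wset E F v e)"
    by (rule inj_onI) (metis doubleton_eq_iff)
  have sub: "(\<lambda>w. {w,v}) ` Wset E F v e \<subseteq> S"
  proof
    fix x assume "x \<in> (\<lambda>w. {w,v}) ` Wset E F v e"
    then obtain w where x: "x = {w,v}" and w: "{w,v} \<in> E" "incompatible F {w,v} e"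
      by (auto simp: Wset_def)
    from inc_sys[OF sys w(2)] obtain u where u: "{w,v} \<noteq> e" "{w,v} \<inter> e = {u}" "{{w,v},e} \<in> F u"
      by blast
    have "v \<in> {w,v} \<inter> e" using ve by simp
    then have "u = v" using u(2) by simp
    then show "x \<in> S" using u w x by (auto simp: S_def insert_commute)
  qed
  have fW: "finite (Wset E F v e)"
    using finite_imageD[OF finite_subset[OF sub fS] inj] .
  have "card (Wset E F v e) = card ((\<lambda>w. {w,v}) ` Wset E F v e)" using card_image[OF inj] by simp
  also have "\<dots> \<le> card S" using card_mono[OF fS sub] .
  finally have "real (card (Wset E F v e)) \<le> real (card S)" by simp
  also have "\<dots> \<le> D" using bnd eE ve unfolding bounded_sys_def S_def by blast
  finally show ?thesis using fW by simp
qed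

lemma card_filter_sum: "finite Y \<Longrightarrow> card {y\<in>Y. R y} = (\<Sum>y\<in>Y. if R y then 1 else 0)"
proof -
  have "{y\<in>Y. R y} = Y \<inter> Collect R" by blast
  then show "finite Y \<Longrightarrow> ?thesis" by (simp add: sum.If_cases)
qed

lemma double_count: "finite X \<Longrightarrow> finite Y \<Longrightarrow>
  (\<Sum>x\<in>X. card {y\<in>Y. R x y}) = (\<Sum>y\<in>Y. card {x\<in>X. R x y})"
  by (simp add: card_filter_sum sum.swap[of _ X Y])




lemma idx_card: "distinct P \<Longrightarrow> card {j\<in>{..<length P}. P!j \<in> S} = card (S \<inter> set P)"
proof -
  assume d: "distinct P"
  have inj: "inj_on (nth P) {j\<in>{..<length P}. P!j \<in> S}"
    using d by (auto simp: inj_on_def nth_eq_iff_index_eq)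
  have "nth P ` {j\<in>{..<length P}. P!j \<in> S} = S \<inter> set P"
    by (auto simp: in_set_conv_nth)
  then show ?thesis using card_image[OF inj] by simp
qed

lemma idx_card_le: "distinct P \<Longrightarrow> finite S \<Longrightarrow> card {j\<in>{..<length P}. P!j \<in> S} \<le> card S"
proof -
  assume d: "distinct P" and fS: "finite S"
  have "card (S \<inter> set P) \<le> card S" using fS by (simp add: card_mono)
  then show ?thesis using idx_card[OF d, of S] by linarith
qed

locale L4 =
  fixes E :: "'a set set" and F :: "'a \<Rightarrow> 'a set set set"
    and A B :: "'a set" and a b :: "nat \<Rightarrow> 'a" and f :: "'a \<Rightarrow> 'a"
    and m :: nat and \<mu> \<beta> \<gamma> :: real and P :: "'a list"
  assumes pos: "\<mu> > 0" "\<beta> > 0" "\<gamma> > 0"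
    and small: "\<gamma> + \<beta> + sqrt \<mu> < 1 / 2000"
    and bip: "bipartite_graph E A B"
    and cardA: "card A = m" and cardB: "card B = m"
    and sys: "incompatibility_system E F"
    and bnd: "bounded_sys E F (\<mu> * real m)"
    and a_bij: "bij_betw a {1..m} A" and b_bij: "bij_betw b {1..m} B"
    and match: "\<forall>i\<in>{1..m}. {a i, b i} \<in> E"
    and f_def: "\<forall>i\<in>{1..m}. f (a i) = b i \<and> f (b i) = a i"
    and P_smooth: "proper_smooth E F A B a b f m \<mu> (nat \<lfloor>\<gamma> * real m\<rfloor>) P"
    and maximal: "\<forall>x. x \<notin> set P \<longrightarrow>
                    \<not> proper_smooth E F A B a b f m \<mu> (nat \<lfloor>\<gamma> * real m\<rfloor>) (f x # x # P)"
begin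

abbreviation "s \<equiv> sqrt \<mu>"
abbreviation "k \<equiv> nat \<lfloor>\<gamma> * real m\<rfloor>"
abbreviation "n \<equiv> length P"
abbreviation "W \<equiv> Wset E F"
abbreviation "bad \<equiv> bad_nbrs E F"
abbreviation "PS \<equiv> proper_smooth E F A B a b f m \<mu> k"
abbreviation "XA \<equiv> X_A F A a b m \<mu>"
abbreviation "XB \<equiv> X_B F B a b m \<mu>"
definition "HB = {w\<in>A. 8 * s * real n \<le> real (card (bad P w))}"

lemma s_pos: "s > 0" using pos by simp
lemma mu_eq: "\<mu> = s * s" using pos by simp
lemma s_small: "s < 1/2000" using small pos by simp
lemma finA: "finite A" and finB: "finite B" and disjAB: "A \<inter> B = {}"
  using bip unfolding bipartite_graph_def by auto
lemma finE: "finite E" using finite_E[OF bip] .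

lemma P_path: "is_path E P" and P_proper: "proper A B a b f k P" and hdA: "hd P \<in> A"
  and lastB: "last P \<in> B" and P_compat: "compatible_path F P"
  and hd_good: "good E F (8 * s) P (hd P)" and last_good: "good E F (8 * s) P (last P)"
  and hd_XA: "hd P \<notin> XA" and last_XB: "last P \<notin> XB"
  using P_smooth unfolding proper_smooth_def by auto

lemma distP: "distinct P" and Pne: "P \<noteq> []" and peE: "path_edges P \<subseteq> E"
  using P_path by (auto simp: is_path_char)

lemma hd0: "hd P = P!0" using Pne by (simp add: hd_conv_nth)
lemma lastn: "last P = P!(n - 1)" using Pne by (simp add: last_conv_nth)

lemma n2: "n \<ge> 2"
proof (rule ccontr)
  assume "\<not> n \<ge> 2"
  moreover have "n \<noteq> 0" using Pne by simp
  ultimately have "n = 1" by linarith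
  then have "hd P = last P" using Pne by (cases P) auto
  then show False using hdA lastB disjAB by auto
qed

lemma setP: "set P \<subseteq> A \<union> B"
proof
  fix u assume "u \<in> set P"
  then obtain j where j: "j < n" "u = P!j" by (auto simp: in_set_conv_nth)
  show "u \<in> A \<union> B"
  proof (cases "Suc j < n")
    case True
    then have "{P!j, P!Suc j} \<in> E" using peE by (auto simp: path_edges_def)
    then show ?thesis using bip_edge[OF bip] j by blast
  next
    case False
    then have "j = n - 1" using j by simp
    then show ?thesis using lastB lastn j by simp
  qed
qed

lemma n_le: "real n \<le> 2 * real m"
proof -
  have "n = card (set P)" using distP by (simp add: distinct_card)
  also have "\<dots> \<le> card (A \<union> B)" using setP finA finB by (simp add: card_mono)
  also have "\<dots> \<le> card A + card B" by (rule card_Un_le)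
  finally show ?thesis using cardA cardB by simp
qed

lemma m_pos: "m \<ge> 1"
proof -
  have "A \<noteq> {}" using hdA by blast
  then show ?thesis using cardA finA by (cases m) auto
qed

lemma W_bound: "v \<in> e \<Longrightarrow> finite (W v e) \<and> real (card (W v e)) \<le> \<mu> * real m"
  using W_card[OF sys bnd finE] pos by simp

lemma A_img: "A = a ` {1..m}" and B_img: "B = b ` {1..m}"
  using a_bij b_bij by (auto simp: bij_betw_def)

lemma fB: "x \<in> B \<Longrightarrow> \<exists>i\<in>{1..m}. x = b i \<and> f x = a i \<and> f (f x) = x \<and> f x \<in> A \<and> {f x, x} \<in> E"
  using B_img f_def match A_img by auto

lemma f_inj: "inj_on f B"
proof (rule inj_onI)
  fix x y assume "x \<in> B" "y \<in> B" "f x = f y"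
  then show "x = y" using fB by metis
qed

lemma XA_bound: "real (card XA) \<le> s * real m"
proof -
  let ?c = "\<lambda>x. card {i\<in>{1..m}. incompatible F {a i, b i} {x, b i}}"
  have sub: "XA \<subseteq> A" by (auto simp: X_A_def)
  have fXA: "finite XA" using finite_subset[OF sub finA] .
  have "real (card XA) * (s * real m) \<le> (\<Sum>x\<in>XA. real (?c x))"
    by (rule sum_bounded_below) (simp add: X_A_def)
  also have "\<dots> \<le> (\<Sum>x\<in>A. real (?c x))"
    by (rule sum_mono2[OF finA sub]) simp
  also have "\<dots> = real (\<Sum>x\<in>A. ?c x)" by simp
  also have "(\<Sum>x\<in>A. ?c x) = (\<Sum>i\<in>{1..m}. card {x\<in>A. incompatible F {a i, b i} {x, b i}})"
    using double_count[OF finA, of "{1..m}"] by simp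
  also have "real \<dots> = (\<Sum>i\<in>{1..m}. real (card {x\<in>A. incompatible F {a i, b i} {x, b i}}))"
    by simp
  also have "\<dots> \<le> real (card {1..m}) * (\<mu> * real m)"
  proof (rule sum_bounded_above)
    fix i assume "i \<in> {1..m}"
    have sub2: "{x\<in>A. incompatible F {a i, b i} {x, b i}} \<subseteq> W (b i) {a i, b i}"
      using inc_sys[OF sys] by (auto simp: Wset_def inc_sym)
    have "b i \<in> {a i, b i}" by simp
    from W_bound[OF this] sub2 show "real (card {x\<in>A. incompatible F {a i, b i} {x, b i}}) \<le> \<mu> * real m"
      by (meson card_mono of_nat_le_iff order_trans)
  qed
  also have "\<dots> = real m * (s * s * real m)" using mu_eq by simp
  finally have "real (card XA) * (s * real m) \<le> (s * real m) * (s * real m)" by (simp add: algebra_simps)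
  moreover have "s * real m > 0" using s_pos m_pos by simp
  ultimately show ?thesis using mult_right_le_imp_le by blast
qed

end


context L4 begin

lemma bad_sub_set: "distinct Q \<Longrightarrow> bad Q w \<subseteq> set Q"
  by (auto simp: bad_char)

lemma bad_fin: "distinct Q \<Longrightarrow> finite (bad Q w)"
  using bad_sub_set finite_subset by blast

lemma HB_bound: "real (card HB) \<le> s * real m / 4"
proof -
  let ?c = "\<lambda>w. card {j\<in>{..<n}. P!j \<in> bad P w}"
  have sub: "HB \<subseteq> A" by (auto simp: HB_def)
  have cc: "card (bad P w) = ?c w" for w
    using idx_card[OF distP, of "bad P w"] bad_sub_set[OF distP, of w]
    by (simp add: Int_absorb2)
  have "real (card HB) * (8 * s * real n) \<le> (\<Sum>w\<in>HB. real (card (bad P w)))"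
    by (rule sum_bounded_below) (simp add: HB_def)
  also have "\<dots> \<le> (\<Sum>w\<in>A. real (card (bad P w)))"
    by (rule sum_mono2[OF finA sub]) simp
  also have "\<dots> = real (\<Sum>w\<in>A. ?c w)" by (simp add: cc)
  also have "(\<Sum>w\<in>A. ?c w) = (\<Sum>j\<in>{..<n}. card {w\<in>A. P!j \<in> bad P w})"
    using double_count[OF finA, of "{..<n}"] by simp
  also have "real \<dots> = (\<Sum>j\<in>{..<n}. real (card {w\<in>A. P!j \<in> bad P w}))"
    by simp
  also have "\<dots> \<le> real (card {..<n}) * (2 * (\<mu> * real m))"
  proof (rule sum_bounded_above)
    fix j assume j: "j \<in> {..<n}"
    let ?W1 = "W (P!j) {P!j, P!(j-1)}" and ?W2 = "W (P!j) {P!j, P!Suc j}"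
    have sub2: "{w\<in>A. P!j \<in> bad P w} \<subseteq> ?W1 \<union> ?W2"
    proof
      fix w assume "w \<in> {w\<in>A. P!j \<in> bad P w}"
      then obtain i where i: "P!j = P!i" "i < n" "{w, P!i} \<in> E"
        "(0 < i \<and> incompatible F {w, P!i} {P!i, P!(i - 1)}) \<or>
         (Suc i < n \<and> incompatible F {w, P!i} {P!i, P!Suc i})"
        by (auto simp: bad_nbrs_def)
      then have "i = j" using j distP by (simp add: nth_eq_iff_index_eq)
      then show "w \<in> ?W1 \<union> ?W2" using i by (auto simp: Wset_def)
    qed
    have b1: "finite ?W1 \<and> real (card ?W1) \<le> \<mu> * real m" by (rule W_bound) simp
    have b2: "finite ?W2 \<and> real (card ?W2) \<le> \<mu> * real m" by (rule W_bound) simp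
    have "card {w\<in>A. P!j \<in> bad P w} \<le> card (?W1 \<union> ?W2)"
      using sub2 b1 b2 by (simp add: card_mono)
    also have "\<dots> \<le> card ?W1 + card ?W2" by (rule card_Un_le)
    finally show "real (card {w\<in>A. P!j \<in> bad P w}) \<le> 2 * (\<mu> * real m)"
      using b1 b2 by linarith
  qed
  also have "\<dots> = (s * real m / 4) * (8 * s * real n)" using mu_eq by simp
  finally have "real (card HB) * (8 * s * real n) \<le> (s * real m / 4) * (8 * s * real n)" .
  moreover have "real n > 0" using Pne by simp
  then have "8 * s * real n > 0" using s_pos by (metis mult_pos_pos zero_less_numeral)
  ultimately show ?thesis using mult_right_le_imp_le by blast
qed

end



lemma bad_new: "distinct Q \<Longrightarrow> distinct P \<Longrightarrow> u \<in> bad_nbrs E F Q w \<Longrightarrow>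
  u \<in> bad_nbrs E F P w \<or> ({w,u} \<in> E \<and> (\<exists>e\<in>path_edges Q - path_edges P. u \<in> e \<and> incompatible F {w,u} e))"
proof -
  assume dQ: "distinct Q" and dP: "distinct P" and u: "u \<in> bad_nbrs E F Q w"
  then obtain e where e: "u \<in> set Q" "{w,u} \<in> E" "e \<in> path_edges Q" "u \<in> e" "incompatible F {w,u} e"
    by (auto simp: bad_char)
  show ?thesis
  proof (cases "e \<in> path_edges P")
    case True
    then have "u \<in> set P" using pe_mem e by metis
    then have "u \<in> bad_nbrs E F P w" using True e dP by (auto simp: bad_char)
    then show ?thesis by blast
  next
    case False then show ?thesis using e by blast
  qed
qed

context L4 begin

lemma rot:
  assumes i: "0 < i" "i < n" and nb: "{P!0, P!i} \<in> E"
    and c1: "\<forall>j\<in>{1..k}. {a j, b j} \<noteq> {P!(i-1), P!i}"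
    and c2: "P!i \<notin> W (P!0) {P!0, P!1}"
    and c3: "P!i \<notin> bad P (P!0)"
    and c4: "P!i \<notin> W (P!0) {last P, P!0}"
    and c5: "P!(i-1) \<notin> XA"
    and c6: "P!(i-1) \<notin> HB"
  shows "PS (rev (take i P) @ drop i P)"
proof -
  define T where "T = take i P"
  define D where "D = drop i P"
  define R where "R = rev T @ D"
  define new where "new = {P!0, P!i}"
  define old where "old = {P!(i-1), P!i}"
  have Tne: "T \<noteq> []" and Dne: "D \<noteq> []" using i by (auto simp: T_def D_def)
  have lastT: "last T = P!(i-1)" using i Tne by (subst last_conv_nth) (auto simp: T_def)
  have hdD: "hd D = P!i" using i by (simp add: D_def hd_drop_conv_nth)
  have hdT: "hd T = P!0" using i hd0 by (simp add: T_def)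
  have TD: "T @ D = P" by (simp add: T_def D_def)
  have peP: "path_edges P = path_edges T \<union> insert old (path_edges D)"
    using pe_append[OF Tne Dne] TD lastT hdD old_def by simp
  have peR: "path_edges R = path_edges T \<union> insert new (path_edges D)"
    using pe_append[of "rev T" D] Tne Dne hdD hdT pe_rev[of T] new_def
    by (simp add: R_def last_rev)
  have peR1: "path_edges R \<subseteq> insert new (path_edges P)" using peP peR by blast
  have peR2: "path_edges P - {old} \<subseteq> path_edges R" using peP peR by blast
  have setR: "set R = set P" using TD by (auto simp: R_def simp del: append_take_drop_id)
  have distR: "distinct R" using distP TD by (auto simp: R_def simp del: append_take_drop_id)
  have lenR: "length R = n" using TD by (auto simp: R_def simp del: append_take_drop_id)
  have hdR: "hd R = P!(i-1)" using Tne lastT by (simp add: R_def hd_rev)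
  have lastR: "last R = last P" using Dne i by (simp add: R_def D_def)
  have Rne: "R \<noteq> []" using Dne by (simp add: R_def)
  have v0A: "P!0 \<in> A" using hdA hd0 by simp
  have viB: "P!i \<in> B" and viA: "P!i \<notin> A" using bip_edgeA[OF bip nb v0A] by auto
  have oldP: "old \<in> path_edges P" using peP by blast
  then have "{P!i, P!(i-1)} \<in> E" using peE old_def by (auto simp: insert_commute)
  then have wA: "P!(i-1) \<in> A" using bip_edgeB[OF bip _ viB] by blast
  have newE: "new \<in> E" using nb new_def by simp
  have pth: "is_path E R" using Rne distR peR1 peE newE by (auto simp: is_path_char)
  have prp: "proper A B a b f k R"
  proof -
    have "\<forall>j\<in>{1..k}. {a j, b j} \<in> path_edges P" using P_proper by (simp add: proper_def)
    then have "\<forall>j\<in>{1..k}. {a j, b j} \<in> path_edges R" using c1 peR2 old_def by blast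
    moreover have "f ` (set P \<inter> A) = set P \<inter> B" using P_proper by (simp add: proper_def)
    ultimately show ?thesis using setR by (simp add: proper_def)
  qed
  have newc: "\<not> incompatible F new e'" if e': "e' \<in> path_edges R" for e'
  proof
    assume inc: "incompatible F new e'"
    then have ne: "e' \<noteq> new" using inc_irrefl[OF sys] by blast
    then have e'P: "e' \<in> path_edges P" using e' peR1 by blast
    from inc_sys[OF sys inc] obtain u where u: "new \<inter> e' = {u}" by blast
    then have "u = P!0 \<or> u = P!i" "u \<in> e'" by (auto simp: new_def)
    then show False
    proof (elim disjE)
      assume "u = P!0"
      then have "e' = {P!0, P!1}" using pe_hd[OF distP e'P] \<open>u \<in> e'\<close> by simp
      then have "P!i \<in> W (P!0) {P!0, P!1}" using inc nb new_def
        by (auto simp: Wset_def insert_commute)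
      then show False using c2 by blast
    next
      assume "u = P!i"
      then have "P!i \<in> bad P (P!0)" using inc nb new_def e'P \<open>u \<in> e'\<close> i distP
        by (auto simp: bad_char)
      then show False using c3 by blast
    qed
  qed
  have compat: "compatible_path F R"
    unfolding compatible_path_def
  proof (intro ballI)
    fix e e' assume e: "e \<in> path_edges R" and e': "e' \<in> path_edges R"
    show "\<not> incompatible F e e'"
    proof (cases "e = new \<or> e' = new")
      case True then show ?thesis using newc e e' inc_sym by metis
    next
      case False
      then have "e \<in> path_edges P" "e' \<in> path_edges P" using e e' peR1 by auto
      then show ?thesis using P_compat by (simp add: compatible_path_def)
    qed
  qed
  have badh: "bad R (P!(i-1)) \<subseteq> bad P (P!(i-1))"
  proof
    fix u assume u: "u \<in> bad R (P!(i-1))"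
    show "u \<in> bad P (P!(i-1))"
    proof (rule ccontr)
      assume nu: "u \<notin> bad P (P!(i-1))"
      then obtain e where e: "{P!(i-1), u} \<in> E" "e \<in> path_edges R - path_edges P" "u \<in> e"
        "incompatible F {P!(i-1), u} e"
        using bad_new[OF distR distP u] by blast
      then have en: "e = new" using peR1 by blast
      then have "u = P!0 \<or> u = P!i" using e(3) new_def by auto
      then show False
      proof
        assume "u = P!0" then show False using bip_edgeA[OF bip e(1) wA] v0A by simp
      next
        assume ui: "u = P!i"
        have "incompatible F {P!0, P!i} old" using e(4) en ui new_def old_def inc_sym by metis
        then have "P!i \<in> bad P (P!0)" using nb oldP i distP old_def
          by (auto simp: bad_char)
        then show False using c3 by blast
      qed
    qed
  qed
  have goodh: "good E F (8 * s) R (hd R)"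
  proof -
    have "\<not> 8 * s * real n \<le> real (card (bad P (P!(i-1))))" using c6 wA by (simp add: HB_def)
    moreover have "card (bad R (P!(i-1))) \<le> card (bad P (P!(i-1)))"
      using badh bad_fin[OF distP] by (simp add: card_mono)
    ultimately show ?thesis using hdR lenR by (simp add: good_def)
  qed
  have badl: "bad R (last P) \<subseteq> bad P (last P)"
  proof
    fix u assume u: "u \<in> bad R (last P)"
    show "u \<in> bad P (last P)"
    proof (rule ccontr)
      assume nu: "u \<notin> bad P (last P)"
      then obtain e where e: "{last P, u} \<in> E" "e \<in> path_edges R - path_edges P" "u \<in> e"
        "incompatible F {last P, u} e"
        using bad_new[OF distR distP u] by blast
      then have en: "e = new" using peR1 by blast
      then have "u = P!0 \<or> u = P!i" using e(3) new_def by auto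
      then show False
      proof
        assume u0: "u = P!0"
        have "incompatible F {P!i, P!0} {last P, P!0}" using e(4) en u0 new_def
          by (metis inc_sym insert_commute)
        then have "P!i \<in> W (P!0) {last P, P!0}" using nb by (auto simp: Wset_def insert_commute)
        then show False using c4 by blast
      next
        assume "u = P!i" then show False using bip_edgeB[OF bip e(1) lastB] viB by simp
      qed
    qed
  qed
  have goodl: "good E F (8 * s) R (last R)"
  proof -
    have "card (bad R (last P)) \<le> card (bad P (last P))"
      using badl bad_fin[OF distP] by (simp add: card_mono)
    then show ?thesis using last_good lastR lenR by (simp add: good_def)
  qed
  show ?thesis
    unfolding R_def[symmetric] T_def[symmetric] D_def[symmetric] proper_smooth_def
    using pth prp hdR wA lastR lastB compat goodh goodl c5 last_XB by simp
qed

end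


context L4 begin

lemma ext:
  assumes nb: "{P!0, x} \<in> E" and xP: "x \<notin> set P"
    and d1: "x \<notin> W (P!0) {P!0, P!1}"
    and d2: "\<not> incompatible F {f x, x} {x, P!0}"
    and d3: "f x \<notin> XA"
    and d4: "f x \<notin> HB"
    and d5: "\<not> incompatible F {last P, f x} {f x, x}"
    and d6: "x \<notin> W (P!0) {last P, P!0}"
  shows "PS (f x # x # P)"
proof -
  define Q where "Q = f x # x # P"
  define n1 where "n1 = {f x, x}"
  define n2 where "n2 = {x, P!0}"
  have v0A: "P!0 \<in> A" using hdA hd0 by simp
  have xB: "x \<in> B" and xA: "x \<notin> A" using bip_edgeA[OF bip nb v0A] by auto
  obtain j where j: "j\<in>{1..m}" "x = b j" "f x = a j" "f (f x) = x" "f x \<in> A" "{f x, x} \<in> E"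
    using fB[OF xB] by blast
  have fxB: "f x \<notin> B" using j disjAB by blast
  have fxP: "f x \<notin> set P"
  proof
    assume "f x \<in> set P"
    then have "f (f x) \<in> f ` (set P \<inter> A)" using j by blast
    then have "x \<in> set P" using P_proper j by (simp add: proper_def)
    then show False using xP by simp
  qed
  have neq: "f x \<noteq> x" "f x \<noteq> P!0" "x \<noteq> P!0" using xB fxB fxP xP Pne by auto
  obtain y ys where Pyy: "P = y # ys" using Pne by (cases P) auto
  have y0: "y = P!0" using Pyy by simp
  have peQ: "path_edges Q = insert n1 (insert n2 (path_edges P))"
    by (simp add: Q_def Pyy pe_Cons2 n1_def n2_def)
  have distQ: "distinct Q" using distP neq fxP xP by (simp add: Q_def)
  have setQ: "set Q = insert (f x) (insert x (set P))" by (simp add: Q_def)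
  have lenQ: "length Q = n + 2" by (simp add: Q_def)
  have lastQ: "last Q = last P" using Pne by (simp add: Q_def)
  have hdQ: "hd Q = f x" by (simp add: Q_def)
  have n1E: "n1 \<in> E" using j n1_def by simp
  have n2E: "n2 \<in> E" using nb n2_def by (simp add: insert_commute)
  have pth: "is_path E Q" using distQ peQ peE n1E n2E by (auto simp: is_path_char Q_def)
  have prp: "proper A B a b f k Q"
  proof -
    have "\<forall>j\<in>{1..k}. {a j, b j} \<in> path_edges P" using P_proper by (simp add: proper_def)
    then have mt: "\<forall>j\<in>{1..k}. {a j, b j} \<in> path_edges Q" using peQ by blast
    have fP: "f ` (set P \<inter> A) = set P \<inter> B" using P_proper by (simp add: proper_def)
    have "set Q \<inter> A = insert (f x) (set P \<inter> A)" using setQ j xA by auto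
    then have "f ` (set Q \<inter> A) = insert x (set P \<inter> B)" using fP j by simp
    also have "\<dots> = set Q \<inter> B" using setQ xB fxB by auto
    finally show ?thesis using mt by (simp add: proper_def)
  qed
  have newc: "\<not> incompatible F e e'" if e: "e \<in> {n1, n2}" and e': "e' \<in> path_edges Q" for e e'
  proof
    assume inc: "incompatible F e e'"
    have ne: "e' \<noteq> e" using inc inc_irrefl[OF sys] by blast
    show False
    proof (cases "e' \<in> {n1, n2}")
      case True
      then have "incompatible F n1 n2" using e ne inc inc_sym by auto
      then show False using d2 n1_def n2_def by simp
    next
      case False
      then have e'P: "e' \<in> path_edges P" using e' peQ by blast
      from inc_sys[OF sys inc] obtain u where u: "e \<inter> e' = {u}" by blast
      then have ue': "u \<in> e'" and ue: "u \<in> e" by auto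
      then have uP: "u \<in> set P" using pe_mem[OF e'P] by blast
      then have "e = n2" "u = P!0" using e ue neq fxP xP n1_def n2_def by auto
      then have "e' = {P!0, P!1}" using pe_hd[OF distP e'P] ue' by simp
      then have "x \<in> W (P!0) {P!0, P!1}" using inc \<open>e = n2\<close> nb n2_def
        by (auto simp: Wset_def insert_commute)
      then show False using d1 by blast
    qed
  qed
  have compat: "compatible_path F Q"
    unfolding compatible_path_def
  proof (intro ballI)
    fix e e' assume e: "e \<in> path_edges Q" and e': "e' \<in> path_edges Q"
    show "\<not> incompatible F e e'"
    proof (cases "e \<in> {n1, n2} \<or> e' \<in> {n1, n2}")
      case True then show ?thesis using newc e e' inc_sym by metis
    next
      case False
      then have "e \<in> path_edges P" "e' \<in> path_edges P" using e e' peQ by auto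
      then show ?thesis using P_compat by (simp add: compatible_path_def)
    qed
  qed
  have badh: "bad Q (f x) \<subseteq> bad P (f x)"
  proof
    fix u assume u: "u \<in> bad Q (f x)"
    show "u \<in> bad P (f x)"
    proof (rule ccontr)
      assume nu: "u \<notin> bad P (f x)"
      then obtain e where e: "{f x, u} \<in> E" "e \<in> {n1, n2}" "u \<in> e"
        "incompatible F {f x, u} e"
        using bad_new[OF distQ distP u] peQ by blast
      have "u \<noteq> f x" using e(1) bip_noloop[OF bip] by blast
      moreover have "u \<noteq> P!0" using e(1) bip_edgeA[OF bip _ j(5)] v0A by blast
      ultimately have ux: "u = x" using e(2,3) n1_def n2_def by auto
      show False
      proof (cases "e = n1")
        case True then show False using e(4) ux inc_irrefl[OF sys] n1_def by simp
      next
        case False then have "e = n2" using e(2) by simp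
        then show False using e(4) ux d2 n2_def by simp
      qed
    qed
  qed
  have goodh: "good E F (8 * s) Q (hd Q)"
  proof -
    have "\<not> 8 * s * real n \<le> real (card (bad P (f x)))" using d4 j by (simp add: HB_def)
    moreover have "card (bad Q (f x)) \<le> card (bad P (f x))"
      using badh bad_fin[OF distP] by (simp add: card_mono)
    moreover have "8 * s * real n \<le> 8 * s * real (n + 2)" using s_pos by simp
    ultimately show ?thesis using hdQ lenQ by (simp add: good_def)
  qed
  have badl: "bad Q (last P) \<subseteq> bad P (last P)"
  proof
    fix u assume u: "u \<in> bad Q (last P)"
    show "u \<in> bad P (last P)"
    proof (rule ccontr)
      assume nu: "u \<notin> bad P (last P)"
      then obtain e where e: "{last P, u} \<in> E" "e \<in> {n1, n2}" "u \<in> e"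
        "incompatible F {last P, u} e"
        using bad_new[OF distQ distP u] peQ by blast
      have "u \<noteq> x" using e(1) bip_edgeB[OF bip _ lastB] xB by blast
      then have "(u = f x \<and> e = n1) \<or> (u = P!0 \<and> e = n2)"
        using e(2,3) neq n1_def n2_def by auto
      then show False
      proof
        assume "u = f x \<and> e = n1" then show False using e(4) d5 n1_def by simp
      next
        assume h: "u = P!0 \<and> e = n2"
        then have "incompatible F {x, P!0} {last P, P!0}" using e(4) n2_def inc_sym by metis
        then have "x \<in> W (P!0) {last P, P!0}" using nb by (auto simp: Wset_def insert_commute)
        then show False using d6 by blast
      qed
    qed
  qed
  have goodl: "good E F (8 * s) Q (last Q)"
  proof -
    have "card (bad Q (last P)) \<le> card (bad P (last P))"
      using badl bad_fin[OF distP] by (simp add: card_mono)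
    moreover have "8 * s * real n \<le> 8 * s * real (n + 2)" using s_pos by simp
    ultimately show ?thesis using last_good lastQ lenQ by (simp add: good_def)
  qed
  show ?thesis
    unfolding Q_def[symmetric] proper_smooth_def
    using pth prp hdQ j lastQ lastB compat goodh goodl d3 last_XB by simp
qed

end


context L4 begin

lemma k_le: "real k \<le> \<gamma> * real m"
proof -
  have "\<gamma> * real m \<ge> 0" using pos by simp
  then show ?thesis by linarith
qed

lemma mu_le: "\<mu> * real m \<le> s * real m"
proof -
  have "s \<le> 1" "0 \<le> s" using s_small s_pos by linarith+
  then have "s * s \<le> s * 1" by (intro mult_left_mono)
  then show ?thesis using mu_eq by (simp add: mult_right_mono)
qed

lemma main:
  shows "\<exists>Z. Z \<subseteq> nbhd E (hd P) \<inter> set P \<and>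
             real (card Z) \<ge> real (deg E (hd P)) - (25 * s + 2 * \<gamma>) * real m \<and>
             (\<forall>i < length P. P ! i \<in> Z \<longrightarrow> PS (rev (take i P) @ drop i P))"
proof -
  define v0 where "v0 = P!0"
  have hdv: "hd P = v0" using hd0 v0_def by simp
  have v0A: "v0 \<in> A" using hdA hdv by simp
  define N where "N = nbhd E v0"
  have Nd: "u \<in> N \<longleftrightarrow> {v0, u} \<in> E" for u by (simp add: N_def nbhd_def)
  have NB: "N \<subseteq> B" using bip_edgeA[OF bip _ v0A] Nd by blast
  have finN: "finite N" using finite_subset[OF NB finB] .
  define R1 where "R1 = {i\<in>{..<n}. 0 < i \<and> (\<exists>j\<in>{1..k}. {a j, b j} = {P!(i-1), P!i})}"
  define R2 where "R2 = {i\<in>{..<n}. P!i \<in> W v0 {v0, P!1}}"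
  define R3 where "R3 = {i\<in>{..<n}. P!i \<in> bad P v0}"
  define R4 where "R4 = {i\<in>{..<n}. P!i \<in> W v0 {last P, v0}}"
  define R5 where "R5 = {i\<in>{..<n}. 0 < i \<and> P!(i-1) \<in> XA}"
  define R6 where "R6 = {i\<in>{..<n}. 0 < i \<and> P!(i-1) \<in> HB}"
  define Iall where "Iall = {i\<in>{..<n}. P!i \<in> N}"
  define I where "I = Iall - (R1 \<union> R2 \<union> R3 \<union> R4 \<union> R5 \<union> R6)"
  define Z where "Z = nth P ` I"
  have Ilt: "i \<in> I \<Longrightarrow> i < n" for i by (auto simp: I_def Iall_def)
  have injI: "inj_on (nth P) I" using distP Ilt by (auto simp: inj_on_def nth_eq_iff_index_eq)
  have cardZ: "card Z = card I" using card_image[OF injI] Z_def by simp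
  have rotI: "PS (rev (take i P) @ drop i P)" if iI: "i \<in> I" for i
  proof -
    have i: "i < n" "P!i \<in> N" "i \<notin> R1" "i \<notin> R2" "i \<notin> R3" "i \<notin> R4" "i \<notin> R5" "i \<notin> R6"
      using iI by (auto simp: I_def Iall_def)
    have nb: "{P!0, P!i} \<in> E" using i(2) Nd v0_def by simp
    have i0: "0 < i"
    proof (rule ccontr)
      assume "\<not> 0 < i" then have "i = 0" by simp
      then show False using nb bip_noloop[OF bip] by simp
    qed
    show ?thesis
      apply (rule rot[OF i0 i(1) nb])
      using i i0 v0_def by (auto simp: R1_def R2_def R3_def R4_def R5_def R6_def)
  qed
  have Zsub: "Z \<subseteq> N \<inter> set P" by (auto simp: Z_def I_def Iall_def)
  have Zrot: "\<forall>i < n. P ! i \<in> Z \<longrightarrow> PS (rev (take i P) @ drop i P)"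
  proof (intro allI impI)
    fix i assume i: "i < n" "P!i \<in> Z"
    then obtain i' where i': "i' \<in> I" "P!i = P!i'" by (auto simp: Z_def)
    then have "i = i'" using Ilt[OF i'(1)] i distP by (simp add: nth_eq_iff_index_eq)
    then show "PS (rev (take i P) @ drop i P)" using rotI i' by simp
  qed
  have fin_lt: "finite X" if "X \<subseteq> {..<n}" for X using that finite_subset by blast
  have cR1: "real (card R1) \<le> \<gamma> * real m"
  proof -
    define M where "M = (\<lambda>j. {a j, b j}) ` {1..k}"
    have inj: "inj_on (\<lambda>i. {P!(i-1), P!i}) R1"
    proof (rule inj_onI)
      fix i i' assume ii: "i \<in> R1" "i' \<in> R1" and eq: "{P!(i-1), P!i} = {P!(i'-1), P!i'}"
      have b: "i < n" "i' < n" "0 < i" "0 < i'" using ii by (auto simp: R1_def)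
      have e1: "(P!i) = P!i' \<longleftrightarrow> i = i'" using b distP by (simp add: nth_eq_iff_index_eq)
      have e2: "(P!(i-1)) = P!i' \<longleftrightarrow> i-1 = i'" using b distP by (simp add: nth_eq_iff_index_eq)
      have e3: "(P!i) = P!(i'-1) \<longleftrightarrow> i = i'-1" using b distP by (simp add: nth_eq_iff_index_eq)
      from eq have "(P!(i-1) = P!(i'-1) \<and> P!i = P!i') \<or> (P!(i-1) = P!i' \<and> P!i = P!(i'-1))"
        by (simp add: doubleton_eq_iff)
      then show "i = i'" using e1 e2 e3 b by auto
    qed
    have sub: "(\<lambda>i. {P!(i-1), P!i}) ` R1 \<subseteq> M" by (auto simp: R1_def M_def)
    have "card R1 \<le> card M" using card_inj_on_le[OF inj sub] by (simp add: M_def)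
    also have "\<dots> \<le> card {1..k}" unfolding M_def by (rule card_image_le) simp
    finally have "card R1 \<le> k" by simp
    then show ?thesis using k_le by linarith
  qed
  have Wb1: "finite (W v0 {v0, P!1}) \<and> real (card (W v0 {v0, P!1})) \<le> \<mu> * real m"
    by (rule W_bound) simp
  have Wb2: "finite (W v0 {last P, v0}) \<and> real (card (W v0 {last P, v0})) \<le> \<mu> * real m"
    by (rule W_bound) simp
  have cR2: "real (card R2) \<le> \<mu> * real m"
    using idx_card_le[OF distP, of "W v0 {v0, P!1}"] Wb1 unfolding R2_def by linarith
  have cR4: "real (card R4) \<le> \<mu> * real m"
    using idx_card_le[OF distP, of "W v0 {last P, v0}"] Wb2 unfolding R4_def by linarith
  have cR3: "real (card R3) \<le> 16 * s * real m"
  proof -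
    have "card R3 \<le> card (bad P v0)"
      using idx_card_le[OF distP bad_fin[OF distP]] unfolding R3_def by blast
    moreover have "real (card (bad P v0)) < 8 * s * real n" using hd_good hdv by (simp add: good_def)
    moreover have "8 * s * real n \<le> 8 * s * (2 * real m)" using n_le s_pos by simp
    ultimately show ?thesis by linarith
  qed
  have finXA: "finite XA" using finite_subset[OF _ finA] by (auto simp: X_A_def)
  have finHB: "finite HB" using finite_subset[OF _ finA] by (auto simp: HB_def)
  have cR5: "real (card R5) \<le> s * real m"
  proof -
    have "R5 \<subseteq> Suc ` {j\<in>{..<n}. P!j \<in> XA}"
    proof
      fix i assume "i \<in> R5"
      then have "i - 1 \<in> {j\<in>{..<n}. P!j \<in> XA}" "i = Suc (i - 1)" by (auto simp: R5_def)
      then show "i \<in> Suc ` {j\<in>{..<n}. P!j \<in> XA}" by blast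
    qed
    then have "card R5 \<le> card (Suc ` {j\<in>{..<n}. P!j \<in> XA})" by (simp add: card_mono)
    also have "\<dots> \<le> card {j\<in>{..<n}. P!j \<in> XA}" by (rule card_image_le) simp
    also have "\<dots> \<le> card XA" by (rule idx_card_le[OF distP finXA])
    finally show ?thesis using XA_bound by linarith
  qed
  have cR6: "real (card R6) \<le> s * real m / 4"
  proof -
    have "R6 \<subseteq> Suc ` {j\<in>{..<n}. P!j \<in> HB}"
    proof
      fix i assume "i \<in> R6"
      then have "i - 1 \<in> {j\<in>{..<n}. P!j \<in> HB}" "i = Suc (i - 1)" by (auto simp: R6_def)
      then show "i \<in> Suc ` {j\<in>{..<n}. P!j \<in> HB}" by blast
    qed
    then have "card R6 \<le> card (Suc ` {j\<in>{..<n}. P!j \<in> HB})" by (simp add: card_mono)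
    also have "\<dots> \<le> card {j\<in>{..<n}. P!j \<in> HB}" by (rule card_image_le) simp
    also have "\<dots> \<le> card HB" by (rule idx_card_le[OF distP finHB])
    finally show ?thesis using HB_bound by linarith
  qed
  have cIall: "card Iall \<le> card I + card R1 + card R2 + card R3 + card R4 + card R5 + card R6"
  proof -
    have "Iall \<subseteq> I \<union> R1 \<union> R2 \<union> R3 \<union> R4 \<union> R5 \<union> R6" by (auto simp: I_def)
    moreover have "finite (I \<union> R1 \<union> R2 \<union> R3 \<union> R4 \<union> R5 \<union> R6)"
      by (auto simp: I_def Iall_def R1_def R2_def R3_def R4_def R5_def R6_def)
    ultimately have "card Iall \<le> card (I \<union> R1 \<union> R2 \<union> R3 \<union> R4 \<union> R5 \<union> R6)" by (simp add: card_mono)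
    moreover have "card (I \<union> R1 \<union> R2 \<union> R3 \<union> R4 \<union> R5 \<union> R6) \<le> card (I \<union> R1 \<union> R2 \<union> R3 \<union> R4 \<union> R5) + card R6"
      by (rule card_Un_le)
    moreover have "card (I \<union> R1 \<union> R2 \<union> R3 \<union> R4 \<union> R5) \<le> card (I \<union> R1 \<union> R2 \<union> R3 \<union> R4) + card R5"
      by (rule card_Un_le)
    moreover have "card (I \<union> R1 \<union> R2 \<union> R3 \<union> R4) \<le> card (I \<union> R1 \<union> R2 \<union> R3) + card R4"
      by (rule card_Un_le)
    moreover have "card (I \<union> R1 \<union> R2 \<union> R3) \<le> card (I \<union> R1 \<union> R2) + card R3"
      by (rule card_Un_le)
    moreover have "card (I \<union> R1 \<union> R2) \<le> card (I \<union> R1) + card R2" by (rule card_Un_le)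
    moreover have "card (I \<union> R1) \<le> card I + card R1" by (rule card_Un_le)
    ultimately show ?thesis by linarith
  qed
  have cNP: "card (N \<inter> set P) = card Iall"
    using idx_card[OF distP, of N] by (simp add: Iall_def)
  define SA where "SA = {i\<in>{1..m}. incompatible F {a i, b i} {v0, b i}}"
  define SB where "SB = {i\<in>{1..m}. incompatible F {a i, b i} {a i, last P}}"
  define E1 where "E1 = W v0 {v0, P!1}"
  define E2 where "E2 = b ` SA"
  define E3 where "E3 = {x\<in>B. f x \<in> XA}"
  define E4 where "E4 = {x\<in>B. f x \<in> HB}"
  define E5 where "E5 = b ` SB"
  define E6 where "E6 = W v0 {last P, v0}"
  have cSA: "real (card SA) < s * real m" using hd_XA hdv v0A by (simp add: X_A_def SA_def)
  have cSB: "real (card SB) < s * real m" using last_XB lastB by (simp add: X_B_def SB_def)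
  have cE2: "real (card E2) < s * real m"
    using card_image_le[of SA b] cSA unfolding E2_def SA_def by fastforce
  have cE5: "real (card E5) < s * real m"
    using card_image_le[of SB b] cSB unfolding E5_def SB_def by fastforce
  have cE3: "real (card E3) \<le> s * real m"
  proof -
    have inj: "inj_on f E3" using f_inj by (rule inj_on_subset) (auto simp: E3_def)
    have "card E3 \<le> card XA" using card_inj_on_le[OF inj _ finXA] by (auto simp: E3_def)
    then show ?thesis using XA_bound by linarith
  qed
  have cE4: "real (card E4) \<le> s * real m / 4"
  proof -
    have inj: "inj_on f E4" using f_inj by (rule inj_on_subset) (auto simp: E4_def)
    have "card E4 \<le> card HB" using card_inj_on_le[OF inj _ finHB] by (auto simp: E4_def)
    then show ?thesis using HB_bound by linarith
  qed
  have NPsub: "N - set P \<subseteq> E1 \<union> E2 \<union> E3 \<union> E4 \<union> E5 \<union> E6"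
  proof
    fix x assume x: "x \<in> N - set P"
    show "x \<in> E1 \<union> E2 \<union> E3 \<union> E4 \<union> E5 \<union> E6"
    proof (rule ccontr)
      assume nx: "x \<notin> E1 \<union> E2 \<union> E3 \<union> E4 \<union> E5 \<union> E6"
      have nb: "{P!0, x} \<in> E" using x Nd v0_def by simp
      have xB: "x \<in> B" using x NB by blast
      obtain j where j: "j\<in>{1..m}" "x = b j" "f x = a j" using fB[OF xB] by blast
      have d2: "\<not> incompatible F {f x, x} {x, P!0}"
      proof
        assume "incompatible F {f x, x} {x, P!0}"
        then have "j \<in> SA" using j v0_def by (simp add: SA_def insert_commute)
        then show False using nx j by (auto simp: E2_def)
      qed
      have d5: "\<not> incompatible F {last P, f x} {f x, x}"
      proof
        assume "incompatible F {last P, f x} {f x, x}"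
        then have "incompatible F {a j, b j} {a j, last P}" using j inc_sym insert_commute by metis
        then have "j \<in> SB" using j by (simp add: SB_def)
        then show False using nx j by (auto simp: E5_def)
      qed
      have "PS (f x # x # P)"
        by (rule ext[OF nb _ _ d2 _ _ d5]) (use x nx xB v0_def in \<open>auto simp: E1_def E3_def E4_def E6_def\<close>)
      then show False using maximal x by blast
    qed
  qed
  have cNP2: "card (N - set P) \<le> card E1 + card E2 + card E3 + card E4 + card E5 + card E6"
  proof -
    have "finite (E1 \<union> E2 \<union> E3 \<union> E4 \<union> E5 \<union> E6)"
      using Wb1 Wb2 finB finXA finHB
      by (auto simp: E1_def E2_def E3_def E4_def E5_def E6_def SA_def SB_def)
    then have "card (N - set P) \<le> card (E1 \<union> E2 \<union> E3 \<union> E4 \<union> E5 \<union> E6)"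
      using NPsub by (simp add: card_mono)
    moreover have "card (E1 \<union> E2 \<union> E3 \<union> E4 \<union> E5 \<union> E6) \<le> card (E1 \<union> E2 \<union> E3 \<union> E4 \<union> E5) + card E6"
      by (rule card_Un_le)
    moreover have "card (E1 \<union> E2 \<union> E3 \<union> E4 \<union> E5) \<le> card (E1 \<union> E2 \<union> E3 \<union> E4) + card E5"
      by (rule card_Un_le)
    moreover have "card (E1 \<union> E2 \<union> E3 \<union> E4) \<le> card (E1 \<union> E2 \<union> E3) + card E4"
      by (rule card_Un_le)
    moreover have "card (E1 \<union> E2 \<union> E3) \<le> card (E1 \<union> E2) + card E3" by (rule card_Un_le)
    moreover have "card (E1 \<union> E2) \<le> card E1 + card E2" by (rule card_Un_le)
    ultimately show ?thesis by linarith
  qed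
  have cN: "card N \<le> card (N \<inter> set P) + card (N - set P)"
  proof -
    have "N = (N \<inter> set P) \<union> (N - set P)" by blast
    then have "card N = card ((N \<inter> set P) \<union> (N - set P))" by simp
    also have "\<dots> \<le> card (N \<inter> set P) + card (N - set P)" by (rule card_Un_le)
    finally show ?thesis .
  qed
  have degN: "deg E (hd P) = card N" by (simp add: deg_def N_def hdv)
  have "real (deg E (hd P)) \<le> real (card Z) + (25 * s + 2 * \<gamma>) * real m"
  proof -
    have r: "real (card N) \<le> real (card I) + real (card R1) + real (card R2) + real (card R3)
      + real (card R4) + real (card R5) + real (card R6) + real (card E1) + real (card E2)
      + real (card E3) + real (card E4) + real (card E5) + real (card E6)"
      using cN cNP cIall cNP2 by linarith
    have e1: "real (card E1) \<le> \<mu> * real m" using Wb1 E1_def by simp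
    have e6: "real (card E6) \<le> \<mu> * real m" using Wb2 E6_def by simp
    have "\<gamma> * real m \<ge> 0" "s * real m \<ge> 0" using pos s_pos by auto
    then show ?thesis using r cR1 cR2 cR3 cR4 cR5 cR6 e1 cE2 cE3 cE4 cE5 e6 mu_le cardZ degN
      by (simp add: algebra_simps)
  qed
  then show ?thesis using Zsub Zrot N_def hdv by (intro exI[of _ Z]) auto
qed

end

theorem lemma4p4:
  fixes E :: "'a set set" and F :: "'a \<Rightarrow> 'a set set set"
    and A B :: "'a set" and a b :: "nat \<Rightarrow> 'a" and f :: "'a \<Rightarrow> 'a"
    and m :: nat and \<mu> \<beta> \<gamma> :: real and P :: "'a list"
  assumes pos: "\<mu> > 0" "\<beta> > 0" "\<gamma> > 0"
    and small: "\<gamma> + \<beta> + sqrt \<mu> < 1 / 2000"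
    and bip: "bipartite_graph E A B"
    and cardA: "card A = m" and cardB: "card B = m"
    and mindeg: "\<forall>v\<in>A \<union> B. real (deg E v) \<ge> real m / 10"
    and edges: "real (card E) \<ge> (1 - \<beta>) * real m ^ 2"
    and sys: "incompatibility_system E F"
    and bnd: "bounded_sys E F (\<mu> * real m)"
    and a_bij: "bij_betw a {1..m} A" and b_bij: "bij_betw b {1..m} B"
    and match: "\<forall>i\<in>{1..m}. {a i, b i} \<in> E"
    and f_def: "\<forall>i\<in>{1..m}. f (a i) = b i \<and> f (b i) = a i"
    and P_smooth: "proper_smooth E F A B a b f m \<mu> (nat \<lfloor>\<gamma> * real m\<rfloor>) P"
    and maximal: "\<forall>x. x \<notin> set P \<longrightarrow>
                    \<not> proper_smooth E F A B a b f m \<mu> (nat \<lfloor>\<gamma> * real m\<rfloor>) (f x # x # P)"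
  shows "\<exists>Z. Z \<subseteq> nbhd E (hd P) \<inter> set P \<and>
             real (card Z) \<ge> real (deg E (hd P)) - (25 * sqrt \<mu> + 2 * \<gamma>) * real m \<and>
             (\<forall>i < length P. P ! i \<in> Z \<longrightarrow>
                proper_smooth E F A B a b f m \<mu> (nat \<lfloor>\<gamma> * real m\<rfloor>)
                  (rev (take i P) @ drop i P))"
proof -
  interpret L4 E F A B a b f m \<mu> \<beta> \<gamma> P
    unfolding L4_def using pos small bip cardA cardB sys bnd a_bij b_bij match f_def P_smooth maximal
    by blast
  show ?thesis by (rule main)
qed

end
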